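(* Let $A\in\{0,1\}^{N\times n}$ and suppose there are $j\in[N]$ and $i_1\ne i_2\in[n]$ with $A_{ji_1}=A_{ji_2}=1$. Let $U_1,\dots,U_N,V_1,\dots,V_n\in\mathbb{R}^d$ be a margin-$m$, relative-bias-$\tau$ embedding of $A$ (for some $m\ge0$, $\tau\in\mathbb{R}$) with $\langle U_j,V_{i_1}\rangle\ne\langle U_j,V_{i_2}\rangle$. Define, for $t>0$, $$\mathcal{L}_{\mathrm{InfoNCE}}(\{U_j\},\{V_i\};t)=-\sum_{(j',i)\in[N]\times[n]:\,A_{j'i}=1}\log\frac{\exp(t\langle U_{j'},V_i\rangle)}{\sum_{\ell=1}^n\exp(t\langle U_{j'},V_\ell\rangle)}.$$ Then $\lim_{T\to+\infty}\mathcal{L}_{\mathrm{InfoNCE}}(\{U_j\},\{V_i\};T)=+\infty$.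
   Context: For $A\in\{0,1\}^{N\times n}$, $m\ge0$ and $\tau\in\mathbb{R}$, unit vectors $U_1,\dots,U_N,V_1,\dots,V_n\in\mathbb{R}^d$ form a margin-$m$, relative-bias-$\tau$ embedding of $A$ if $\langle U_j,V_i\rangle\ge\tau+m$ whenever $A_{ji}=1$ and $\langle U_j,V_i\rangle\le\tau-m$ whenever $A_{ji}=0$. *)

theory Defs
  imports "HOL-Analysis.Analysis"
begin

text \<open>The 0/1 matrix A is a function
  nat => nat => nat whose entries on [N] x [n] lie in {0,1}. Vectors live in an arbitrary
  Euclidean space 'a (playing the role of R^d).\<close>

definition margin_embedding ::
  "nat \<Rightarrow> nat \<Rightarrow> (nat \<Rightarrow> nat \<Rightarrow> nat) \<Rightarrow> real \<Rightarrow> real \<Rightarrow>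
   (nat \<Rightarrow> 'a::euclidean_space) \<Rightarrow> (nat \<Rightarrow> 'a) \<Rightarrow> bool" where
  "margin_embedding N n A m \<tau> U V \<longleftrightarrow>
     (\<forall>j<N. norm (U j) = 1) \<and> (\<forall>i<n. norm (V i) = 1) \<and>
     (\<forall>j<N. \<forall>i<n. A j i = 1 \<longrightarrow> inner (U j) (V i) \<ge> \<tau> + m) \<and>
     (\<forall>j<N. \<forall>i<n. A j i = 0 \<longrightarrow> inner (U j) (V i) \<le> \<tau> - m)"

definition infoNCE_loss ::
  "nat \<Rightarrow> nat \<Rightarrow> (nat \<Rightarrow> nat \<Rightarrow> nat) \<Rightarrow> (nat \<Rightarrow> 'a::euclidean_space) \<Rightarrow> (nat \<Rightarrow> 'a) \<Rightarrow> real \<Rightarrow> real" where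
  "infoNCE_loss N n A U V t =
     - (\<Sum>(j', i) \<in> {(j', i). j' < N \<and> i < n \<and> A j' i = 1}.
          ln (exp (t * inner (U j') (V i)) / (\<Sum>l<n. exp (t * inner (U j') (V l)))))"

end

theory Submission
  imports Defs
begin

lemma term_bound:
  fixes x :: "nat \<Rightarrow> real"
  assumes "i < n" "k < n"
  shows "- ln (exp (x i) / (\<Sum>l<n. exp (x l))) \<ge> x k - x i"
proof -
  have pos: "(\<Sum>l<n. exp (x l)) > 0"
    using assms by (intro sum_pos2[where i=i]) auto
  have ge: "exp (x k) \<le> (\<Sum>l<n. exp (x l))"
    using assms by (intro member_le_sum) auto
  have "- ln (exp (x i) / (\<Sum>l<n. exp (x l))) = ln (\<Sum>l<n. exp (x l)) - x i"
    using pos by (simp add: ln_div)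
  moreover have "ln (\<Sum>l<n. exp (x l)) \<ge> x k"
    using ge pos by (metis ln_exp ln_le_cancel_iff exp_gt_zero)
  ultimately show ?thesis by simp
qed

lemma term_nonneg:
  fixes x :: "nat \<Rightarrow> real"
  assumes "i < n"
  shows "- ln (exp (x i) / (\<Sum>l<n. exp (x l))) \<ge> 0"
  using term_bound[OF assms assms, of x] by simp

theorem propositionH1:
  fixes N n :: nat and A :: "nat \<Rightarrow> nat \<Rightarrow> nat"
    and U V :: "nat \<Rightarrow> 'a::euclidean_space" and m \<tau> :: real
    and j i1 i2 :: nat
  assumes A01: "\<forall>j'<N. \<forall>i<n. A j' i \<in> {0, 1}"
    and j: "j < N" and i1: "i1 < n" and i2: "i2 < n" and ne: "i1 \<noteq> i2"
    and A1: "A j i1 = 1" and A2: "A j i2 = 1"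
    and m: "m \<ge> 0"
    and emb: "margin_embedding N n A m \<tau> U V"
    and dist: "inner (U j) (V i1) \<noteq> inner (U j) (V i2)"
  shows "filterlim (\<lambda>T. infoNCE_loss N n A U V T) at_top at_top"
proof -
  define a1 where "a1 = inner (U j) (V i1)"
  define a2 where "a2 = inner (U j) (V i2)"
  define c where "c = \<bar>a2 - a1\<bar>"
  have c: "c > 0" using dist unfolding c_def a1_def a2_def by simp
  define S where "S = {(j', i). j' < N \<and> i < n \<and> A j' i = 1}"
  have finS: "finite S" unfolding S_def
    by (rule finite_subset[of _ "{..<N} \<times> {..<n}"]) auto
  have bound: "infoNCE_loss N n A U V t \<ge> t * c" if t: "t \<ge> 0" for t
  proof -
    define g where "g = (\<lambda>(j'::nat, i::nat). - ln (exp (t * inner (U j') (V i)) / (\<Sum>l<n. exp (t * inner (U j') (V l)))))"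
    have eq: "infoNCE_loss N n A U V t = (\<Sum>p\<in>S. g p)"
      unfolding infoNCE_loss_def S_def g_def by (simp add: sum_negf case_prod_unfold)
    have nn: "\<And>p. p \<in> S \<Longrightarrow> 0 \<le> g p"
      unfolding S_def g_def using term_nonneg by auto
    have m1: "(j, i1) \<in> S" "(j, i2) \<in> S" unfolding S_def using j i1 i2 A1 A2 by auto
    have "g (j, i1) \<le> (\<Sum>p\<in>S. g p)" "g (j, i2) \<le> (\<Sum>p\<in>S. g p)"
      by (rule member_le_sum[OF m1(1) nn finS], simp) (rule member_le_sum[OF m1(2) nn finS], simp)
    moreover have "g (j, i1) \<ge> t * a2 - t * a1"
      unfolding g_def a1_def a2_def
      using term_bound[OF i1 i2, of "\<lambda>l. t * inner (U j) (V l)"] by simp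
    moreover have "g (j, i2) \<ge> t * a1 - t * a2"
      unfolding g_def a1_def a2_def
      using term_bound[OF i2 i1, of "\<lambda>l. t * inner (U j) (V l)"] by simp
    moreover have "t * c = t * (a2 - a1) \<or> t * c = t * (a1 - a2)"
      unfolding c_def by (auto simp: abs_if)
    ultimately show ?thesis using eq by (auto simp: algebra_simps)
  qed
  have lim: "filterlim (\<lambda>t. t * c) at_top at_top"
    using c by (intro filterlim_at_top_mult_tendsto_pos[OF tendsto_const] filterlim_ident)
  show ?thesis
    apply (rule filterlim_at_top_mono[OF lim])
    using eventually_ge_at_top[of "0::real"] by eventually_elim (rule bound)
qed

end
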